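(* Let $(\alpha_j)_{j\ge1}$ be nonnegative with $\sum_j j\alpha_j=1$ and $\alpha_1<1$, and for $\omega\ge1$ let \[q_j^{(\omega)}=\frac{j\alpha_j}{\omega^{j-1}h_j(\omega)}\left(\frac{1-\sum_{i\ge1}\frac{1}{4^{i-1}}\binom{2i-1}{i-1}\frac{i\alpha_i}{\omega^{i-1}h_i(\omega)}}{4}\right)^{j-1},\qquad h_p(\omega)=\sum_{s=0}^{p-1}(4\omega)^{-s}\binom{2s}{s}.\] Then for every $j\ge1$, the function $\omega\mapsto q_j^{(\omega)}$ is nonincreasing on $[1,+\infty)$. Moreover, if $j\ge2$ and $\alpha_j>0$, this function is (strictly) decreasing.
   Context: ($\mathbf q^{(\omega)}$ is the unique weight sequence whose infinite Boltzmann planar map has root face half-degree law $(j\alpha_j)$ and hyperbolicity parameter $\omega$, but the claim only concerns the explicit formula above.) *)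

theory Defs
  imports "HOL-Analysis.Analysis"
begin

definition h_fun :: "nat \<Rightarrow> real \<Rightarrow> real" where
  "h_fun p \<omega> = (\<Sum>s<p. real ((2 * s) choose s) / (4 * \<omega>) ^ s)"

definition q_fun :: "(nat \<Rightarrow> real) \<Rightarrow> real \<Rightarrow> nat \<Rightarrow> real" where
  "q_fun \<alpha> \<omega> j =
     real j * \<alpha> j / (\<omega> ^ (j - 1) * h_fun j \<omega>) *
     ((1 - (\<Sum>i. (let k = Suc i in
          real ((2*k - 1) choose (k - 1)) / 4 ^ (k - 1)
          * (real k * \<alpha> k / (\<omega> ^ (k - 1) * h_fun k \<omega>))))) / 4) ^ (j - 1)"

end

theory Submission
  imports Defs
begin

definition aa :: "nat \<Rightarrow> real" where "aa s = real ((2 * s) choose s) / 4^s"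

fun GG :: "nat \<Rightarrow> real \<Rightarrow> real" where
  "GG 0 x = 0"
| "GG (Suc i) x = x * GG i x + aa i"

fun EE :: "nat \<Rightarrow> real \<Rightarrow> real" where
  "EE 0 x = 0"
| "EE (Suc i) x = x * (GG i x + EE i x)"

lemma aa_pos: "aa s > 0" by (simp add: aa_def)

lemma binom_odd: "Suc i * ((2 * i+1) choose i) = (2 * i+1) * ((2 * i) choose i)"
proof -
  have "Suc i * (Suc (2 * i) choose Suc i) = Suc (2 * i) * ((2 * i) choose i)"
    by (rule Suc_times_binomial)
  moreover have "Suc (2 * i) choose Suc i = Suc (2 * i) choose i"
    using binomial_symmetric[of i "Suc (2 * i)"] by (simp add: Suc_diff_le)
  ultimately show ?thesis by simp
qed

lemma binom_even: "((2 * i+2) choose (i+1)) = 2 * ((2 * i+1) choose i)"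
proof -
  have "Suc i * (Suc (2 * i+1) choose Suc i) = Suc (2 * i+1) * ((2 * i+1) choose i)"
    by (rule Suc_times_binomial)
  hence "Suc i * (Suc (2 * i+1) choose Suc i) = Suc i * (2 * ((2 * i+1) choose i))" by simp
  hence "(Suc (2 * i+1) choose Suc i) = 2 * ((2 * i+1) choose i)" by (metis mult_left_cancel nat.distinct(1))
  thus ?thesis by simp
qed

lemma aa_Suc: "aa (Suc i) * (2 * real i + 2) = aa i * (2 * real i + 1)"
proof -
  have en: "((2 * i+2) choose (i+1)) * (i + 1) = 2 * (2 * i + 1) * ((2 * i) choose i)"
    using binom_even[of i] binom_odd[of i] by (simp del: binomial_Suc_Suc add: algebra_simps)
  have e: "real ((2 * i+2) choose (i+1)) * (real i + 1) = 2 * (2 * real i + 1) * real ((2 * i) choose i)"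
    using arg_cong[OF en, of real] by (simp del: binomial_Suc_Suc add: algebra_simps)
  have "aa (Suc i) * (2 * real i + 2) = 2 * (real ((2 * i+2) choose (i+1)) * (real i + 1)) / 4^(Suc i)"
    by (simp del: binomial_Suc_Suc add: aa_def field_simps)
  also have "\<dots> = aa i * (2 * real i + 1)"
    by (subst e) (simp del: binomial_Suc_Suc add: aa_def field_simps)
  finally show ?thesis .
qed

lemma cc_eq: "real ((2 * i+1) choose i) / 4^i = 2 * aa (Suc i)"
proof -
  have "real ((2 * i+2) choose (i+1)) = 2 * real ((2 * i+1) choose i)"
    using arg_cong[OF binom_even[of i], of real] by (simp del: binomial_Suc_Suc)
  then show ?thesis by (simp del: binomial_Suc_Suc add: aa_def field_simps)
qed

lemma GG_one: "GG i 1 = 2 * real i * aa i"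
proof (induction i)
  case 0 then show ?case by simp
next
  case (Suc i)
  then show ?case using aa_Suc[of i] by (simp add: algebra_simps)
qed

lemma GG_nonneg: "x \<ge> 0 \<Longrightarrow> GG i x \<ge> 0"
  by (induction i) (auto intro!: add_nonneg_nonneg simp: aa_pos less_imp_le)

lemma GG_pos: "x \<ge> 0 \<Longrightarrow> i \<ge> 1 \<Longrightarrow> GG i x > 0"
  by (cases i) (auto intro!: add_nonneg_pos simp: aa_pos GG_nonneg)

lemma GG_mono: "0 \<le> x \<Longrightarrow> x \<le> y \<Longrightarrow> GG i x \<le> GG i y"
  by (induction i) (auto intro!: mult_mono simp: GG_nonneg)

lemma GG_ge: "1 \<le> x \<Longrightarrow> GG i x \<ge> 2 * real i * aa i"
  using GG_mono[of 1 x i] GG_one[of i] by simp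

lemma h_GG: "x > 0 \<Longrightarrow> x ^ i * h_fun (Suc i) x = GG (Suc i) x"
proof (induction i)
  case 0 then show ?case by (simp add: h_fun_def aa_def)
next
  case (Suc i)
  have "h_fun (Suc (Suc i)) x = h_fun (Suc i) x + aa (Suc i) / x ^ (Suc i)"
    by (simp add: h_fun_def aa_def power_mult_distrib)
  then have "x ^ Suc i * h_fun (Suc (Suc i)) x = x * (x ^ i * h_fun (Suc i) x) + aa (Suc i)"
    using Suc.prems by (simp add: field_simps)
  then show ?case using Suc by simp
qed


declare GG.simps(2)[simp del]

lemma pow_lem: "1 \<le> (s::real) \<Longrightarrow> s * (s ^ n - 1) \<le> real n * s ^ n * (s - 1)"
proof (induction n)
  case 0 then show ?case by simp
next
  case (Suc n)
  have "s * (s ^ Suc n - 1) = s * (s * (s ^ n - 1)) + s * (s - 1)" by (simp add: algebra_simps)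
  also have "\<dots> \<le> s * (real n * s ^ n * (s - 1)) + s ^ Suc n * (s - 1)"
  proof -
    have "s \<le> s ^ Suc n" using mult_left_mono[of 1 "s ^ n" s] one_le_power[of s n] Suc.prems by simp
    then have "s * (s - 1) \<le> s ^ Suc n * (s - 1)" using Suc.prems by (intro mult_right_mono) auto
    moreover have "s * (s * (s ^ n - 1)) \<le> s * (real n * s ^ n * (s - 1))"
      using Suc by (intro mult_left_mono) auto
    ultimately show ?thesis by linarith
  qed
  also have "\<dots> = real (Suc n) * s ^ Suc n * (s - 1)" by (simp add: algebra_simps)
  finally show ?case .
qed

lemma GG_scale:
  assumes x: "1 \<le> x" and s: "1 \<le> s"
  shows "s ^ (2 * i) * GG (Suc i) x \<le> GG (Suc i) (s ^ 3 * x)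
       \<and> (1 < s \<and> 1 \<le> i \<longrightarrow> s ^ (2 * i) * GG (Suc i) x < GG (Suc i) (s ^ 3 * x))"
proof (induction i)
  case 0 then show ?case by (simp add: GG.simps)
next
  case (Suc i)
  define a where "a = aa (Suc i)"
  define X where "X = x * GG (Suc i) x"
  define n where "n = 2 * i + 2"
  have apos: "a > 0" using aa_pos a_def by simp
  have Gx: "GG (Suc i) x \<ge> 2 * real (Suc i) * a" using GG_ge[OF x, of "Suc i"] unfolding a_def .
  have "1 * GG (Suc i) x \<le> X" unfolding X_def using x GG_nonneg[of x "Suc i"]
    by (intro mult_right_mono) auto
  then have Xge: "X \<ge> real n * a" using Gx n_def by simp
  have s0: "s ^ n \<ge> 1" using s by simp
  have pl: "s * (s ^ n - 1) \<le> real n * s ^ n * (s - 1)" by (rule pow_lem[OF s])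
  have pl2: "s ^ n - 1 \<le> real n * s ^ n * (s - 1)"
  proof -
    have "s ^ n - 1 \<le> s * (s ^ n - 1)" using mult_right_mono[of 1 s "s ^ n - 1"] s s0 by simp
    then show ?thesis using pl by linarith
  qed
  have key: "s ^ n * a - a \<le> s ^ n * (s - 1) * X"
  proof -
    have "(s ^ n - 1) * a \<le> (real n * s ^ n * (s - 1)) * a" using pl2 apos by (intro mult_right_mono) auto
    also have "\<dots> = (s ^ n * (s - 1)) * (real n * a)" by (simp add: algebra_simps)
    also have "\<dots> \<le> (s ^ n * (s - 1)) * X" using Xge s s0 by (intro mult_left_mono) auto
    finally have "(s ^ n - 1) * a \<le> s ^ n * (s - 1) * X" by simp
    then show ?thesis by (simp add: algebra_simps)
  qed
  have IH: "s ^ (2 * i) * GG (Suc i) x \<le> GG (Suc i) (s ^ 3 * x)" using Suc by simp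
  have step: "s ^ 3 * x * (s ^ (2 * i) * GG (Suc i) x) \<le> s ^ 3 * x * GG (Suc i) (s ^ 3 * x)"
    using IH x s by (intro mult_left_mono) auto
  have e1: "s ^ 3 * x * (s ^ (2 * i) * GG (Suc i) x) = s ^ n * X + s ^ n * (s - 1) * X"
  proof -
    have "s ^ 3 * x * (s ^ (2 * i) * GG (Suc i) x) = s ^ (2 * i + 3) * X" by (simp add: X_def power_add mult_ac)
    also have "\<dots> = s ^ n * s * X" by (simp add: n_def power_add numeral_eq_Suc)
    also have "\<dots> = s ^ n * X + s ^ n * (s - 1) * X" by (simp add: algebra_simps)
    finally show ?thesis .
  qed
  have e2: "s ^ (2 * Suc i) * GG (Suc (Suc i)) x = s ^ n * X + s ^ n * a"
    by (simp add: n_def X_def a_def distrib_left mult_ac GG.simps(2)[of "Suc i"])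
  have e3: "GG (Suc (Suc i)) (s ^ 3 * x) = s ^ 3 * x * GG (Suc i) (s ^ 3 * x) + a"
    by (simp add: a_def GG.simps(2)[of "Suc i"])
  have nonstrict: "s ^ (2 * Suc i) * GG (Suc (Suc i)) x \<le> GG (Suc (Suc i)) (s ^ 3 * x)"
    using e1 e2 e3 step key by linarith
  moreover have "1 < s \<Longrightarrow> s ^ (2 * Suc i) * GG (Suc (Suc i)) x < GG (Suc (Suc i)) (s ^ 3 * x)"
  proof -
    assume s1: "1 < s"
    have "s ^ n > 1" using one_less_power[OF s1, of n] n_def by simp
    then have "s ^ n - 1 < s * (s ^ n - 1)" using mult_strict_right_mono[of 1 s "s ^ n - 1"] s1 by simp
    then have pl3: "s ^ n - 1 < real n * s ^ n * (s - 1)" using pl by linarith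
    have "(s ^ n - 1) * a < (real n * s ^ n * (s - 1)) * a" using pl3 apos by simp
    also have "\<dots> = (s ^ n * (s - 1)) * (real n * a)" by (simp add: algebra_simps)
    also have "\<dots> \<le> (s ^ n * (s - 1)) * X" using Xge s s0 by (intro mult_left_mono) auto
    finally have "(s ^ n - 1) * a < s ^ n * (s - 1) * X" by simp
    then have "s ^ n * a - a < s ^ n * (s - 1) * X" by (simp add: algebra_simps)
    then show ?thesis using e1 e2 e3 step by linarith
  qed
  ultimately show ?case by blast
qed


lemma GE_ineq: "1 \<le> x \<Longrightarrow> 3 * aa i * EE i x \<le> GG i x ^ 2 - 2 * aa i * GG i x"
proof (induction i)
  case 0 then show ?case by simp
next
  case (Suc i)
  define a where "a = aa i"
  define G where "G = GG i x"
  define E where "E = EE i x"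
  define r where "r = real i"
  have x: "1 \<le> x" by fact
  have a0: "a > 0" using aa_pos a_def by simp
  have r0: "r \<ge> 0" using r_def by simp
  have G0: "G \<ge> 0" using GG_nonneg[of x i] x G_def by simp
  have Gr: "G \<ge> 2 * r * a" using GG_ge[OF x, of i] G_def r_def a_def by simp
  have H: "3 * a * E \<le> G^2 - 2 * a * G" using Suc a_def G_def E_def by simp
  have H': "x * (3 * a * E) \<le> x * (G^2 - 2 * a * G)" by (rule mult_left_mono[OF H]) (use x in auto)
  have P1: "(2*r+1) * (x * (3 * a * E)) \<le> (2*r+1) * (x * (G^2 - 2 * a * G))" by (rule mult_left_mono[OF H']) (use r0 in auto)
  have xx: "x * x \<ge> x" using x by (simp add: mult_le_cancel_left1)
  have F1: "(x * x) * G^2 \<ge> x * G^2" using xx by (intro mult_right_mono) auto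
  have P2: "(2*r+2) * ((x * x) * G^2) \<ge> (2*r+2) * (x * G^2)" by (rule mult_left_mono[OF F1]) (use r0 in auto)
  have F2: "(x * G) * G \<ge> (x * G) * (2 * r * a)" by (rule mult_left_mono[OF Gr]) (use x G0 in auto)
  have xG: "x * G \<ge> 2 * r * a" using Gr x G0 by (smt (verit) mult_le_cancel_right1 mult.commute)
  have F3: "a * (x * G) \<ge> a * (2 * r * a)" by (rule mult_left_mono[OF xG]) (use a0 in auto)
  have aS: "aa (Suc i) * (2 * r + 2) = a * (2 * r + 1)" using aa_Suc[of i] a_def r_def by simp
  have GS: "GG (Suc i) x = x * G + a" by (simp add: GG.simps G_def a_def)
  have ES: "EE (Suc i) x = x * (G + E)" by (simp add: G_def E_def)
  have main: "(2 * r + 2) * (3 * aa (Suc i) * EE (Suc i) x) \<le> (2 * r + 2) * (GG (Suc i) x ^ 2 - 2 * aa (Suc i) * GG (Suc i) x)"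
  proof -
    have l: "(2 * r + 2) * (3 * aa (Suc i) * EE (Suc i) x) = 3 * (aa (Suc i) * (2 * r + 2)) * EE (Suc i) x"
      by (simp only: mult_ac)
    have rr: "(2 * r + 2) * (GG (Suc i) x ^ 2 - 2 * aa (Suc i) * GG (Suc i) x) = (2*r+2) * GG (Suc i) x ^ 2 - 2 * (aa (Suc i) * (2 * r + 2)) * GG (Suc i) x"
      by (simp only: right_diff_distrib mult_ac)
    have fin: "3 * (a * (2*r+1)) * (x * (G + E)) \<le> (2*r+2) * (x*G+a)^2 - 2 * (a * (2*r+1)) * (x*G+a)"
      using P1 P2 F2 F3 by (simp add: algebra_simps power2_eq_square)
    show ?thesis unfolding l rr unfolding aS unfolding GS ES using fin by simp
  qed
  then show ?case using r0 by (simp add: mult_le_cancel_left_pos) 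
qed

lemma GG_deriv: "x > 0 \<Longrightarrow> (GG i has_real_derivative EE i x / x) (at x)"
proof (induction i)
  case 0 then show ?case by simp
next
  case (Suc i)
  have f: "GG (Suc i) = (\<lambda>y. y * GG i y + aa i)" by (rule ext) (simp add: GG.simps)
  have "((\<lambda>y. y * GG i y + aa i) has_real_derivative (x * (EE i x / x) + 1 * GG i x + 0)) (at x)"
    by (intro DERIV_add DERIV_mult' DERIV_ident DERIV_const Suc.IH Suc.prems)
  moreover have "x * (EE i x / x) + 1 * GG i x + 0 = EE (Suc i) x / x" using Suc.prems by (simp add: field_simps)
  ultimately show ?case by (simp add: f)
qed


definition phi :: "nat \<Rightarrow> real \<Rightarrow> real" where "phi i t = 1 - 2 * aa i / GG i t"

lemma phi_deriv_nonpos: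
  assumes i: "1 \<le> i" and t: "1 \<le> t"
  shows "\<exists>D. ((\<lambda>t. phi i t ^ 3 / t ^ 2) has_real_derivative D) (at t) \<and> D \<le> 0"
proof -
  define a where "a = aa i"
  define G where "G = GG i t"
  define E where "E = EE i t"
  have t0: "t > 0" using t by simp
  have G0: "G > 0" using GG_pos[of t i] t i G_def by simp
  have a0: "a > 0" using aa_pos a_def by simp
  have dG: "(GG i has_real_derivative E / t) (at t)" using GG_deriv[OF t0] E_def by simp
  have dq: "((\<lambda>t. 2 * aa i / GG i t) has_real_derivative (0 * G - 2 * a * (E / t)) / (G * G)) (at t)"
    using DERIV_divide[OF DERIV_const dG, of "2 * aa i"] G0 G_def a_def by simp
  define Dp where "Dp = 0 - (0 * G - 2 * a * (E / t)) / (G * G)"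
  have dphi: "(phi i has_real_derivative Dp) (at t)"
    unfolding phi_def[abs_def] Dp_def by (rule DERIV_diff[OF DERIV_const dq])
  have dpow: "((\<lambda>t. phi i t ^ 3) has_real_derivative of_nat 3 * (Dp * phi i t ^ (3 - Suc 0))) (at t)"
    by (rule DERIV_power[OF dphi])
  have dt2: "((\<lambda>t. t ^ 2) has_real_derivative of_nat 2 * (1 * t ^ (2 - Suc 0))) (at t)"
    by (rule DERIV_power[OF DERIV_ident])
  define p where "p = phi i t"
  have df: "((\<lambda>t. phi i t ^ 3 / t ^ 2) has_real_derivative
      (of_nat 3 * (Dp * p ^ (3 - Suc 0)) * t ^ 2 - p ^ 3 * (of_nat 2 * (1 * t ^ (2 - Suc 0)))) / (t ^ 2 * t ^ 2)) (at t)"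
    unfolding p_def by (rule DERIV_divide[OF dpow dt2]) (use t0 in simp)
  have ineq: "3 * a * E \<le> G ^ 2 - 2 * a * G" using GE_ineq[OF t, of i] a_def G_def E_def by simp
  have pe: "p = 1 - 2 * a / G" unfolding p_def phi_def a_def G_def ..
  have tD: "t * Dp = 2 * a * E / G ^ 2" unfolding Dp_def using t0 G0 by (simp add: field_simps power2_eq_square)
  have k: "3 * (t * Dp) - 2 * p \<le> 0"
  proof -
    have "3 * a * E / G ^ 2 \<le> (G ^ 2 - 2 * a * G) / G ^ 2" using ineq G0 by (simp add: divide_right_mono)
    also have "\<dots> = p" unfolding pe using G0 by (simp add: field_simps power2_eq_square)
    finally show ?thesis unfolding tD by simp
  qed
  have num: "of_nat 3 * (Dp * p ^ (3 - Suc 0)) * t ^ 2 - p ^ 3 * (of_nat 2 * (1 * t ^ (2 - Suc 0)))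
      = (p ^ 2 * t) * (3 * (t * Dp) - 2 * p)"
    by (simp add: algebra_simps power2_eq_square power3_eq_cube)
  have "(p ^ 2 * t) * (3 * (t * Dp) - 2 * p) \<le> 0"
    using k t0 by (intro mult_nonneg_nonpos) auto
  then have "(of_nat 3 * (Dp * p ^ (3 - Suc 0)) * t ^ 2 - p ^ 3 * (of_nat 2 * (1 * t ^ (2 - Suc 0)))) / (t ^ 2 * t ^ 2) \<le> 0"
    unfolding num using t0 by (intro divide_nonpos_pos) auto
  then show ?thesis using df by blast
qed

lemma phi_scale:
  assumes i: "1 \<le> i" and x: "1 \<le> x" and s: "1 \<le> s"
  shows "phi i (s ^ 3 * x) \<le> s ^ 2 * phi i x"
proof -
  define y where "y = s ^ 3 * x"
  have s3: "s ^ 3 \<ge> 1" using s by simp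
  have xy: "x \<le> y" unfolding y_def using mult_right_mono[OF s3, of x] x by simp
  have "phi i y ^ 3 / y ^ 2 \<le> phi i x ^ 3 / x ^ 2"
    using DERIV_nonpos_imp_nonincreasing[OF xy, of "\<lambda>t. phi i t ^ 3 / t ^ 2"] phi_deriv_nonpos[OF i] x
    by (metis order_trans)
  then have "phi i y ^ 3 \<le> phi i x ^ 3 / x ^ 2 * y ^ 2" using x xy by (simp add: divide_le_eq)
  also have "\<dots> = (s ^ 2 * phi i x) ^ 3" using x unfolding y_def by (simp add: field_simps power_mult_distrib power2_eq_square power3_eq_cube)
  finally have c: "phi i y ^ 3 \<le> (s ^ 2 * phi i x) ^ 3" .
  have "phi i x \<ge> 0"
  proof -
    have "GG i x \<ge> 2 * real i * aa i" by (rule GG_ge[OF x])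
    moreover have "2 * real i * aa i \<ge> 2 * aa i" using i aa_pos[of i] by simp
    ultimately show ?thesis unfolding phi_def using GG_pos[of x i] x i by (simp add: field_simps)
  qed
  then have "s ^ 2 * phi i x \<ge> 0" by simp
  then show ?thesis using power_le_imp_le_base[OF c[unfolded numeral_3_eq_3]] unfolding y_def by simp
qed


definition Wf :: "(nat \<Rightarrow> real) \<Rightarrow> real \<Rightarrow> real" where
  "Wf \<alpha> w = 1 - (\<Sum>i. 2 * aa (Suc i) * (real (Suc i) * \<alpha> (Suc i) / GG (Suc i) w))"

lemma q_eq:
  assumes w: "w > 0"
  shows "q_fun \<alpha> w (Suc m) = real (Suc m) * \<alpha> (Suc m) / GG (Suc m) w * (Wf \<alpha> w / 4) ^ m"
proof -
  have t: "(let k = Suc i in real ((2*k - 1) choose (k - 1)) / 4 ^ (k - 1)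
          * (real k * \<alpha> k / (w ^ (k - 1) * h_fun k w)))
        = 2 * aa (Suc i) * (real (Suc i) * \<alpha> (Suc i) / GG (Suc i) w)" for i
  proof -
    have e: "2 * Suc i - 1 = 2 * i + 1" "Suc i - 1 = i" by simp_all
    show ?thesis unfolding Let_def e h_GG[OF w] cc_eq ..
  qed
  show ?thesis unfolding q_fun_def t Wf_def using h_GG[OF w, of m] by simp
qed

lemma GG_ge2: "1 \<le> x \<Longrightarrow> 1 \<le> k \<Longrightarrow> 2 * aa k \<le> GG k x"
proof -
  assume x: "1 \<le> x" and k: "1 \<le> k"
  have "2 * aa k \<le> 2 * real k * aa k" using aa_pos[of k] k by simp
  then show ?thesis using GG_ge[OF x, of k] by linarith
qed

lemma phi_bounds: "1 \<le> x \<Longrightarrow> 1 \<le> k \<Longrightarrow> 0 \<le> phi k x \<and> phi k x \<le> 1"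
  using GG_ge2[of x k] GG_pos[of x k] aa_pos[of k] unfolding phi_def by (simp add: field_simps)

lemma phi_pos: "1 \<le> x \<Longrightarrow> 2 \<le> k \<Longrightarrow> 0 < phi k x"
proof -
  assume x: "1 \<le> x" and k: "2 \<le> k"
  have "GG k x \<ge> 2 * real k * aa k" by (rule GG_ge[OF x])
  moreover have "2 * real k * aa k > 2 * aa k" using k aa_pos[of k] by simp
  ultimately show ?thesis unfolding phi_def using GG_pos[of x k] x k by (simp add: field_simps)
qed


context
  fixes \<alpha> :: "nat \<Rightarrow> real"
  assumes nonneg: "\<And>j. j \<ge> 1 \<Longrightarrow> \<alpha> j \<ge> 0"
    and sum1: "(\<lambda>j. real (Suc j) * \<alpha> (Suc j)) sums 1"
begin

lemma B_nonneg: "0 \<le> real (Suc i) * \<alpha> (Suc i)"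
  using nonneg[of "Suc i"] by simp

lemma B_summable: "summable (\<lambda>j. real (Suc j) * \<alpha> (Suc j))"
  using sum1 sums_summable by blast

lemma Bphi_summable: "1 \<le> w \<Longrightarrow> summable (\<lambda>i. real (Suc i) * \<alpha> (Suc i) * phi (Suc i) w)"
proof -
  assume w: "1 \<le> w"
  show ?thesis
  proof (rule summable_comparison_test'[OF B_summable, of 0])
    fix n :: nat
    have p: "0 \<le> phi (Suc n) w" "phi (Suc n) w \<le> 1" using phi_bounds[OF w, of "Suc n"] by auto
    have b: "0 \<le> real (Suc n) * \<alpha> (Suc n)" by (rule B_nonneg)
    have "norm (real (Suc n) * \<alpha> (Suc n) * phi (Suc n) w) = real (Suc n) * \<alpha> (Suc n) * phi (Suc n) w"
      unfolding real_norm_def by (rule abs_of_nonneg[OF mult_nonneg_nonneg[OF b p(1)]])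
    also have "\<dots> \<le> real (Suc n) * \<alpha> (Suc n)" by (rule mult_left_le[OF p(2) b])
    finally show "norm (real (Suc n) * \<alpha> (Suc n) * phi (Suc n) w) \<le> real (Suc n) * \<alpha> (Suc n)" .
  qed
qed

lemma W_eq: "1 \<le> w \<Longrightarrow> Wf \<alpha> w = (\<Sum>i. real (Suc i) * \<alpha> (Suc i) * phi (Suc i) w)"
proof -
  assume w: "1 \<le> w"
  define T where "T i = 2 * aa (Suc i) * (real (Suc i) * \<alpha> (Suc i) / GG (Suc i) w)" for i
  have Teq: "T i = real (Suc i) * \<alpha> (Suc i) - real (Suc i) * \<alpha> (Suc i) * phi (Suc i) w" for i
    unfolding T_def phi_def using GG_pos[of w "Suc i"] w by (simp add: field_simps)
  have sT: "summable T"
    unfolding Teq by (intro summable_diff B_summable Bphi_summable w)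
  have "Wf \<alpha> w = (\<Sum>i. real (Suc i) * \<alpha> (Suc i)) - suminf T"
    unfolding Wf_def T_def using sums_unique[OF sum1] by simp
  also have "\<dots> = (\<Sum>i. real (Suc i) * \<alpha> (Suc i) - T i)"
    by (rule suminf_diff[OF B_summable sT])
  also have "\<dots> = (\<Sum>i. real (Suc i) * \<alpha> (Suc i) * phi (Suc i) w)"
    unfolding Teq by simp
  finally show ?thesis .
qed

lemma W_nonneg: "1 \<le> w \<Longrightarrow> 0 \<le> Wf \<alpha> w"
  unfolding W_eq by (intro suminf_nonneg Bphi_summable) (use phi_bounds[of w] B_nonneg in auto)

lemma W_pos: "1 \<le> w \<Longrightarrow> 2 \<le> j \<Longrightarrow> 0 < \<alpha> j \<Longrightarrow> 0 < Wf \<alpha> w"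
proof -
  assume w: "1 \<le> w" and j: "2 \<le> j" and aj: "0 < \<alpha> j"
  obtain m where m: "j = Suc m" using j by (cases j) auto
  show ?thesis unfolding W_eq[OF w]
  proof (rule suminf_pos2[of _ m])
    show "summable (\<lambda>i. real (Suc i) * \<alpha> (Suc i) * phi (Suc i) w)" by (rule Bphi_summable[OF w])
    show "0 \<le> real (Suc n) * \<alpha> (Suc n) * phi (Suc n) w" for n
      using mult_nonneg_nonneg[OF B_nonneg[of n], of "phi (Suc n) w"] phi_bounds[OF w, of "Suc n"] by simp
    show "0 < real (Suc m) * \<alpha> (Suc m) * phi (Suc m) w" using phi_pos[OF w, of j] aj j m by simp
  qed
qed

lemma W_scale: "1 \<le> x \<Longrightarrow> 1 \<le> s \<Longrightarrow> Wf \<alpha> (s ^ 3 * x) \<le> s ^ 2 * Wf \<alpha> x"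
proof -
  assume x: "1 \<le> x" and s: "1 \<le> s"
  have y: "1 \<le> s ^ 3 * x" using x s by (metis mult_mono' one_le_power mult_1_left zero_le_one)
  have "Wf \<alpha> (s ^ 3 * x) = (\<Sum>i. real (Suc i) * \<alpha> (Suc i) * phi (Suc i) (s ^ 3 * x))" by (rule W_eq[OF y])
  also have "\<dots> \<le> (\<Sum>i. s ^ 2 * (real (Suc i) * \<alpha> (Suc i) * phi (Suc i) x))"
  proof (rule suminf_le)
    show "summable (\<lambda>i. real (Suc i) * \<alpha> (Suc i) * phi (Suc i) (s ^ 3 * x))" by (rule Bphi_summable[OF y])
    show "summable (\<lambda>i. s ^ 2 * (real (Suc i) * \<alpha> (Suc i) * phi (Suc i) x))" by (intro summable_mult Bphi_summable x)
    show "real (Suc n) * \<alpha> (Suc n) * phi (Suc n) (s ^ 3 * x) \<le> s ^ 2 * (real (Suc n) * \<alpha> (Suc n) * phi (Suc n) x)" for n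
      using mult_left_mono[OF phi_scale[of "Suc n" x s] B_nonneg[of n]] x s by (simp add: mult_ac)
  qed
  also have "\<dots> = s ^ 2 * Wf \<alpha> x" unfolding W_eq[OF x] by (rule suminf_mult[OF Bphi_summable[OF x]])
  finally show ?thesis .
qed

lemma core:
  assumes x: "1 \<le> x" and s: "1 \<le> s"
  shows "q_fun \<alpha> (s ^ 3 * x) (Suc m) \<le> q_fun \<alpha> x (Suc m)
    \<and> (1 < s \<and> 1 \<le> m \<and> 0 < \<alpha> (Suc m) \<longrightarrow> q_fun \<alpha> (s ^ 3 * x) (Suc m) < q_fun \<alpha> x (Suc m))"
proof -
  define y where "y = s ^ 3 * x"
  have y: "1 \<le> y" unfolding y_def using x s by (metis mult_mono' one_le_power mult_1_left zero_le_one)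
  define c where "c = real (Suc m) * \<alpha> (Suc m)"
  define Gx where "Gx = GG (Suc m) x"
  define Gy where "Gy = GG (Suc m) y"
  define S where "S = s ^ (2 * m)"
  define U where "U = (Wf \<alpha> y / 4) ^ m"
  define V where "V = (Wf \<alpha> x / 4) ^ m"
  have c0: "c \<ge> 0" unfolding c_def using B_nonneg .
  have Gx0: "Gx > 0" unfolding Gx_def using GG_pos[of x "Suc m"] x by simp
  have Gy0: "Gy > 0" unfolding Gy_def using GG_pos[of y "Suc m"] y by simp
  have S1: "S \<ge> 1" unfolding S_def using s by simp
  have V0: "V \<ge> 0" unfolding V_def using W_nonneg[OF x] by simp
  have qy: "q_fun \<alpha> y (Suc m) = c / Gy * U" unfolding c_def Gy_def U_def using q_eq[of y] y by simp
  have qx: "q_fun \<alpha> x (Suc m) = c / Gx * V" unfolding c_def Gx_def V_def using q_eq[of x] x by simp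
  have GS: "S * Gx \<le> Gy" "1 < s \<and> 1 \<le> m \<longrightarrow> S * Gx < Gy"
    unfolding S_def Gx_def Gy_def y_def using GG_scale[OF x s, of m] by auto
  have UV: "U \<le> S * V"
  proof -
    have "Wf \<alpha> y / 4 \<le> s ^ 2 * Wf \<alpha> x / 4" using W_scale[OF x s] unfolding y_def by simp
    then have "U \<le> (s ^ 2 * Wf \<alpha> x / 4) ^ m" unfolding U_def using W_nonneg[OF y] by (intro power_mono) auto
    also have "\<dots> = (s ^ 2) ^ m * (Wf \<alpha> x / 4) ^ m" by (simp add: power_mult_distrib[symmetric])
    also have "\<dots> = S * V" unfolding S_def V_def by (simp add: power_mult)
    finally show ?thesis .
  qed
  have step1: "c / Gy * U \<le> c / Gy * (S * V)" using UV c0 Gy0 by (intro mult_left_mono) auto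
  have e1: "c / Gy * (S * V) = (c * S * V) / Gy" by simp
  have e2: "c / Gx * V = (c * S * V) / (S * Gx)" using S1 by simp
  have cSV: "c * S * V \<ge> 0" using c0 S1 V0 by simp
  have SGx: "S * Gx > 0" using S1 Gx0 by simp
  have step2: "(c * S * V) / Gy \<le> (c * S * V) / (S * Gx)"
    using divide_left_mono[OF GS(1) cSV] SGx Gy0 by simp
  have nonstrict: "q_fun \<alpha> y (Suc m) \<le> q_fun \<alpha> x (Suc m)"
    unfolding qy qx using step1 step2 e1 e2 by linarith
  moreover have "q_fun \<alpha> y (Suc m) < q_fun \<alpha> x (Suc m)" if st: "1 < s" "1 \<le> m" "0 < \<alpha> (Suc m)"
  proof -
    have "c > 0" unfolding c_def using st by simp
    moreover have "V > 0" unfolding V_def using W_pos[OF x, of "Suc m"] st by simp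
    ultimately have cSV': "c * S * V > 0" using S1 by simp
    have "(c * S * V) / Gy < (c * S * V) / (S * Gx)"
    proof -
      have GS2: "S * Gx < Gy" using GS(2) st by simp
      show ?thesis by (rule divide_strict_left_mono[OF GS2 cSV' mult_pos_pos[OF Gy0 SGx]])
    qed
    then show ?thesis unfolding qy qx using step1 e1 e2 by linarith
  qed
  ultimately show ?thesis unfolding y_def by blast
qed

end

theorem lemma15:
  fixes \<alpha> :: "nat \<Rightarrow> real"
  assumes nonneg: "\<And>j. j \<ge> 1 \<Longrightarrow> \<alpha> j \<ge> 0"
    and sum1: "(\<lambda>j. real (Suc j) * \<alpha> (Suc j)) sums 1"
    and a1: "\<alpha> 1 < 1"
  shows "(\<forall>j \<ge> 1. antimono_on {1..} (\<lambda>\<omega>. q_fun \<alpha> \<omega> j)) \<and>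
         (\<forall>j \<ge> 2. \<alpha> j > 0 \<longrightarrow> strict_antimono_on {1..} (\<lambda>\<omega>. q_fun \<alpha> \<omega> j))"
proof -
  have red: "\<exists>s. 1 \<le> s \<and> y = s ^ 3 * x \<and> (x < y \<longrightarrow> 1 < s)" if "1 \<le> x" "x \<le> y" for x y :: real
  proof (intro exI conjI impI)
    show "1 \<le> root 3 (y / x)" using that by simp
    show "y = root 3 (y / x) ^ 3 * x" using that by simp
    show "1 < root 3 (y / x)" if "x < y" using that \<open>1 \<le> x\<close> by simp
  qed
  have A: "antimono_on {1..} (\<lambda>\<omega>. q_fun \<alpha> \<omega> j)" if j: "j \<ge> 1" for j
  proof (rule monotone_onI)
    fix x y :: real assume xy: "x \<in> {1..}" "y \<in> {1..}" "x \<le> y"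
    obtain m where m: "j = Suc m" using j by (cases j) auto
    obtain s where s: "1 \<le> s" "y = s ^ 3 * x" using red[of x y] xy by auto
    show "q_fun \<alpha> y j \<le> q_fun \<alpha> x j"
      using core[OF nonneg sum1, of x s m] xy s m by auto
  qed
  have B: "strict_antimono_on {1..} (\<lambda>\<omega>. q_fun \<alpha> \<omega> j)" if j: "j \<ge> 2" "\<alpha> j > 0" for j
  proof (rule monotone_onI)
    fix x y :: real assume xy: "x \<in> {1..}" "y \<in> {1..}" "x < y"
    obtain m where m: "j = Suc m" "1 \<le> m" using j by (cases j) auto
    obtain s where s: "1 \<le> s" "y = s ^ 3 * x" "1 < s" using red[of x y] xy by auto
    show "q_fun \<alpha> y j < q_fun \<alpha> x j"
      using core[OF nonneg sum1, of x s m] xy s m j by auto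
  qed
  show ?thesis using A B by blast
qed

end
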